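(* Let $\mathcal{W}_1,\ldots,\mathcal{W}_n\subset\mathbb{R}^n$ be finite sets with convex hulls $Q_1,\ldots,Q_n$ respectively, such that each $Q_i$ is a segment (of positive length) and $Q=Q_1+\cdots+Q_n$ has dimension $n$. Then for every vector $\delta\in\mathbb{R}^n$ of sufficiently small norm which does not lie in the linear span of $F-F$ for any proper face $F$ of $Q$, $$D(\mathcal{W}_1,\ldots,\mathcal{W}_n)=|(\mathcal{W}_1+\cdots+\mathcal{W}_n)\cap(\delta+Q)|.$$
   Context: $D(\mathcal{W}_1,\ldots,\mathcal{W}_n)=\sum_{I\subset[n]}(-1)^{n-|I|}|\sum_{i\in I}\mathcal{W}_i|$, where $\sum_{i\in I}\mathcal{W}_i=\{\sum_{i\in I}w_i:w_i\in\mathcal{W}_i\}$ and the term for $I=\emptyset$ is $(-1)^n\cdot1$. *)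

theory Defs
  imports "HOL-Analysis.Analysis"
begin

definition msum :: "('i \<Rightarrow> 'a::comm_monoid_add set) \<Rightarrow> 'i set \<Rightarrow> 'a set" where
  "msum W I = {(\<Sum>i\<in>I. w i) | w. \<forall>i\<in>I. w i \<in> W i}"

definition mixedD :: "('i \<Rightarrow> 'a::comm_monoid_add set) \<Rightarrow> 'i set \<Rightarrow> int" where
  "mixedD W J = (\<Sum>I\<in>Pow J. (-1) ^ (card J - card I) * int (card (msum W I)))"

end

theory Submission
  imports Defs
begin


lemma msum_param:
  fixes a v :: "'n::finite \<Rightarrow> 'm::real_vector"
  shows "msum (\<lambda>i. (\<lambda>s. a i + s *\<^sub>R v i) ` T i) UNIV =
         (\<lambda>t. (\<Sum>i\<in>UNIV. a i) + (\<Sum>i\<in>UNIV. t$i *\<^sub>R v i)) ` {t. \<forall>i. t$i \<in> T i}"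
proof (rule set_eqI, rule iffI)
  fix x assume "x \<in> msum (\<lambda>i. (\<lambda>s. a i + s *\<^sub>R v i) ` T i) UNIV"
  then obtain w where x: "x = (\<Sum>i\<in>UNIV. w i)" and w: "\<forall>i. w i \<in> (\<lambda>s. a i + s *\<^sub>R v i) ` T i"
    unfolding msum_def by blast
  then have "\<forall>i. \<exists>s. s \<in> T i \<and> w i = a i + s *\<^sub>R v i" by blast
  then obtain s where s: "\<And>i. s i \<in> T i \<and> w i = a i + s i *\<^sub>R v i" by metis
  define t where "t = (\<chi> i. s i)"
  have "x = (\<Sum>i\<in>UNIV. a i) + (\<Sum>i\<in>UNIV. t$i *\<^sub>R v i)"
    unfolding x t_def using s by (simp add: sum.distrib)
  moreover have "t \<in> {t. \<forall>i. t$i \<in> T i}" using s by (simp add: t_def)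
  ultimately show "x \<in> (\<lambda>t. (\<Sum>i\<in>UNIV. a i) + (\<Sum>i\<in>UNIV. t$i *\<^sub>R v i)) ` {t. \<forall>i. t$i \<in> T i}"
    by blast
next
  fix x assume "x \<in> (\<lambda>t. (\<Sum>i\<in>UNIV. a i) + (\<Sum>i\<in>UNIV. t$i *\<^sub>R v i)) ` {t. \<forall>i. t$i \<in> T i}"
  then obtain t where x: "x = (\<Sum>i\<in>UNIV. a i) + (\<Sum>i\<in>UNIV. t$i *\<^sub>R v i)" and t: "\<forall>i. t$i \<in> T i"
    by blast
  have "x = (\<Sum>i\<in>UNIV. a i + t$i *\<^sub>R v i)" by (simp add: x sum.distrib)
  moreover have "\<forall>i\<in>UNIV. a i + t$i *\<^sub>R v i \<in> (\<lambda>s. a i + s *\<^sub>R v i) ` T i" using t by blast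
  ultimately show "x \<in> msum (\<lambda>i. (\<lambda>s. a i + s *\<^sub>R v i) ` T i) UNIV"
    unfolding msum_def by blast
qed

lemma msum_card:
  fixes a v :: "'n::finite \<Rightarrow> 'm::real_vector"
  assumes inj0: "\<And>t::real^'n. (\<Sum>i\<in>UNIV. t$i *\<^sub>R v i) = 0 \<Longrightarrow> t = 0"
  shows "card (msum (\<lambda>i. (\<lambda>s. a i + s *\<^sub>R v i) ` T i) I) = card (PiE I T)"
proof -
  let ?f = "\<lambda>g. (\<Sum>i\<in>I. a i + g i *\<^sub>R v i)"
  have eq: "msum (\<lambda>i. (\<lambda>s. a i + s *\<^sub>R v i) ` T i) I = ?f ` PiE I T"
  proof (rule set_eqI, rule iffI)
    fix x assume "x \<in> msum (\<lambda>i. (\<lambda>s. a i + s *\<^sub>R v i) ` T i) I"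
    then obtain w where x: "x = (\<Sum>i\<in>I. w i)" and w: "\<forall>i\<in>I. w i \<in> (\<lambda>s. a i + s *\<^sub>R v i) ` T i"
      unfolding msum_def by blast
    then have "\<forall>i\<in>I. \<exists>s. s \<in> T i \<and> w i = a i + s *\<^sub>R v i" by blast
    then obtain s where s: "\<And>i. i \<in> I \<Longrightarrow> s i \<in> T i \<and> w i = a i + s i *\<^sub>R v i" by metis
    define g where "g = restrict s I"
    have "g \<in> PiE I T" using s by (auto simp: g_def)
    moreover have "x = ?f g" unfolding x g_def using s by (auto intro: sum.cong)
    ultimately show "x \<in> ?f ` PiE I T" by blast
  next
    fix x assume "x \<in> ?f ` PiE I T"
    then obtain g where g: "g \<in> PiE I T" and x: "x = ?f g" by blast
    have "\<forall>i\<in>I. a i + g i *\<^sub>R v i \<in> (\<lambda>s. a i + s *\<^sub>R v i) ` T i" using g by blast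
    then show "x \<in> msum (\<lambda>i. (\<lambda>s. a i + s *\<^sub>R v i) ` T i) I"
      unfolding msum_def x by blast
  qed
  have "inj_on ?f (PiE I T)"
  proof (rule inj_onI)
    fix g h assume g: "g \<in> PiE I T" and h: "h \<in> PiE I T" and e: "?f g = ?f h"
    define t :: "real^'n" where "t = (\<chi> i. if i \<in> I then g i - h i else 0)"
    have "(\<Sum>i\<in>UNIV. t$i *\<^sub>R v i) = (\<Sum>i\<in>I. (g i - h i) *\<^sub>R v i)"
      proof -
      have "(\<Sum>i\<in>UNIV. t$i *\<^sub>R v i) = (\<Sum>i\<in>UNIV. if i \<in> I then (g i - h i) *\<^sub>R v i else 0)"
        unfolding t_def by (intro sum.cong) auto
      also have "\<dots> = (\<Sum>i\<in>I. (g i - h i) *\<^sub>R v i)"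
        using sum.inter_restrict[of UNIV "\<lambda>i. (g i - h i) *\<^sub>R v i" I] by simp
      finally show ?thesis .
    qed
    also have "\<dots> = (\<Sum>i\<in>I. g i *\<^sub>R v i) - (\<Sum>i\<in>I. h i *\<^sub>R v i)"
      by (simp add: scaleR_diff_left sum_subtractf)
    also have "\<dots> = 0" using e by (simp add: sum.distrib)
    finally have "t = 0" by (rule inj0)
    have "\<forall>i\<in>I. g i = h i"
    proof
      fix i assume i: "i \<in> I"
      have "t$i = 0" using \<open>t = 0\<close> by simp
      then show "g i = h i" using i by (simp add: t_def)
    qed
    then show "g = h" using g h by (auto intro: PiE_ext)
  qed
  then show ?thesis by (simp add: eq card_image)
qed

lemma vec_card:
  fixes T :: "'n::finite \<Rightarrow> real set"
  shows "card {t::real^'n. \<forall>i. t$i \<in> T i} = (\<Prod>i\<in>UNIV. card (T i))"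
proof -
  have "{t::real^'n. \<forall>i. t$i \<in> T i} = (\<lambda>f. \<chi> i. f i) ` PiE UNIV T"
  proof (rule set_eqI, rule iffI)
    fix t :: "real^'n" assume "t \<in> {t. \<forall>i. t$i \<in> T i}"
    then have "(\<lambda>i. t$i) \<in> PiE UNIV T" by auto
    moreover have "t = (\<chi> i. t$i)" by simp
    ultimately show "t \<in> (\<lambda>f. \<chi> i. f i) ` PiE UNIV T" by blast
  qed auto
  moreover have "inj_on (\<lambda>f. \<chi> i. f i :: real^'n) (PiE UNIV T)"
    by (auto simp: inj_on_def vec_eq_iff fun_eq_iff)
  ultimately show ?thesis by (simp add: card_image card_PiE)
qed


theorem proposition5p3:
  fixes W :: "'n::finite \<Rightarrow> (real^'n) set"
  assumes fin: "\<And>i. finite (W i)"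
    and seg: "\<And>i. \<exists>a b. a \<noteq> b \<and> convex hull (W i) = closed_segment a b"
    and dim: "aff_dim (msum (\<lambda>i. convex hull (W i)) UNIV) = int CARD('n)"
  shows "\<exists>\<epsilon>>0. \<forall>\<delta>::real^'n. norm \<delta> < \<epsilon> \<and>
           (\<forall>F. F face_of (msum (\<lambda>i. convex hull (W i)) UNIV) \<and> F \<noteq> {} \<and>
                F \<noteq> msum (\<lambda>i. convex hull (W i)) UNIV \<longrightarrow>
                \<delta> \<notin> span {x - y | x y. x \<in> F \<and> y \<in> F})
         \<longrightarrow> mixedD W UNIV =
             int (card (msum W UNIV \<inter> (\<lambda>q. \<delta> + q) ` msum (\<lambda>i. convex hull (W i)) UNIV))"
proof -
  define Q where "Q = msum (\<lambda>i. convex hull (W i)) UNIV"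
  obtain a b where ab: "\<And>i. a i \<noteq> b i \<and> convex hull (W i) = closed_segment (a i) (b i)"
    using seg by metis
  define v where "v i = b i - a i" for i
  define A where "A = (\<Sum>i\<in>UNIV. a i)"
  define L where "L t = (\<Sum>i\<in>UNIV. t$i *\<^sub>R v i)" for t :: "real^'n"
  define P where "P t = A + L t" for t
  define S where "S i = {s. 0 \<le> s \<and> s \<le> 1 \<and> a i + s *\<^sub>R v i \<in> W i}" for i
  define box where "box = {t::real^'n. \<forall>i. t$i \<in> {0..1}}"
  have seg_eq: "closed_segment (a i) (b i) = (\<lambda>s. a i + s *\<^sub>R v i) ` {0..1}" for i
  proof (rule set_eqI, rule iffI)
    fix x assume "x \<in> closed_segment (a i) (b i)"
    then obtain u where u: "0 \<le> u" "u \<le> 1" "x = (1 - u) *\<^sub>R a i + u *\<^sub>R b i"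
      unfolding closed_segment_def by blast
    then have "x = a i + u *\<^sub>R v i" by (simp add: v_def algebra_simps)
    then show "x \<in> (\<lambda>s. a i + s *\<^sub>R v i) ` {0..1}" using u by auto
  next
    fix x assume "x \<in> (\<lambda>s. a i + s *\<^sub>R v i) ` {0..1}"
    then obtain u where u: "0 \<le> u" "u \<le> 1" "x = a i + u *\<^sub>R v i" by auto
    then have "x = (1 - u) *\<^sub>R a i + u *\<^sub>R b i" by (simp add: v_def algebra_simps)
    then show "x \<in> closed_segment (a i) (b i)" using u unfolding closed_segment_def by blast
  qed
  have ch: "convex hull (W i) = (\<lambda>s. a i + s *\<^sub>R v i) ` {0..1}" for i
    using ab seg_eq by metis
  have v0: "v i \<noteq> 0" for i using ab[of i] by (auto simp: v_def)
  have WS: "W i = (\<lambda>s. a i + s *\<^sub>R v i) ` S i" for i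
  proof (rule set_eqI, rule iffI)
    fix x assume x: "x \<in> W i"
    then have "x \<in> convex hull (W i)" by (rule hull_inc)
    then obtain s where "0 \<le> s" "s \<le> 1" "x = a i + s *\<^sub>R v i" unfolding ch by auto
    then show "x \<in> (\<lambda>s. a i + s *\<^sub>R v i) ` S i" using x by (auto simp: S_def)
  qed (auto simp: S_def)
  have abW: "a i \<in> W i \<and> b i \<in> W i" for i
    using extreme_point_of_convex_hull[of "a i" "W i"] extreme_point_of_convex_hull[of "b i" "W i"]
      extreme_point_of_segment ab by metis
  have S01: "0 \<in> S i \<and> 1 \<in> S i" for i
    using abW[of i] by (simp add: S_def v_def)
  have Sle: "s \<in> S i \<Longrightarrow> 0 \<le> s \<and> s \<le> 1" for s i by (simp add: S_def)
  have finS: "finite (S i)" for i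
  proof -
    have "inj (\<lambda>s. a i + s *\<^sub>R v i)" using v0[of i] by (auto simp: inj_def)
    then have "finite ((\<lambda>s. a i + s *\<^sub>R v i) -` W i)" using fin[of i] by (rule finite_vimageI[rotated])
    moreover have "S i \<subseteq> (\<lambda>s. a i + s *\<^sub>R v i) -` W i" by (auto simp: S_def)
    ultimately show ?thesis by (rule finite_subset[rotated])
  qed
  have linL: "linear L"
    unfolding L_def by (rule linearI) (simp_all add: sum.distrib scaleR_add_left scaleR_sum_right)
  have Weq: "W = (\<lambda>i. (\<lambda>s. a i + s *\<^sub>R v i) ` S i)" using WS by auto
  have CHeq: "(\<lambda>i. convex hull (W i)) = (\<lambda>i. (\<lambda>s. a i + s *\<^sub>R v i) ` {0..1})" using ch by auto
  have Q_eq: "Q = P ` box"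
    unfolding Q_def CHeq msum_param P_def A_def L_def box_def ..
  have MW: "msum W UNIV = P ` {t. \<forall>i. t$i \<in> S i}"
    unfolding Weq msum_param P_def A_def L_def ..
  have surjL: "surj L"
  proof -
    have "affine hull Q = UNIV" using dim aff_dim_eq_full[of Q] unfolding Q_def by simp
    moreover have "Q \<subseteq> (+) A ` range L" unfolding Q_eq P_def by auto
    moreover have "affine ((+) A ` range L)"
    proof -
      have "subspace (range L)" by (rule real_vector.linear_subspace_image[OF linL subspace_UNIV])
      then have "affine (range L)" by (rule subspace_imp_affine)
      then show ?thesis by (rule affine_translation[THEN iffD1])
    qed
    ultimately have "UNIV \<subseteq> (+) A ` range L" using hull_minimal[of Q "(+) A ` range L" affine] by simp
    show ?thesis
    proof (rule surjI)
      fix y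
      have "A + y \<in> (+) A ` range L" using \<open>UNIV \<subseteq> _\<close> by blast
      then obtain t where "A + y = A + L t" by blast
      then have "L t = y" by simp
      then show "L (SOME t. L t = y) = y" by (rule someI)
    qed
  qed
  have injL: "inj L" using linL surjL by (simp add: linear_surjective_imp_injective)
  have L0: "L t = 0 \<Longrightarrow> t = 0" for t using injL linear_0[OF linL] by (metis injD)
  have injP: "inj P" using injL by (auto simp: inj_def P_def)
  have cardW: "card (msum W I) = (\<Prod>i\<in>I. card (S i))" for I
  proof -
    have "card (msum W I) = card (PiE I S)"
      unfolding Weq by (rule msum_card) (use L0 in \<open>simp add: L_def\<close>)
    then show ?thesis by (simp add: card_PiE)
  qed
  have D: "mixedD W UNIV = (\<Prod>i\<in>UNIV. int (card (S i)) - 1)"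
  proof -
    have "(\<Prod>i\<in>UNIV. int (card (S i)) + (-1)) =
          (\<Sum>X\<in>Pow UNIV. (\<Prod>i\<in>X. int (card (S i))) * (\<Prod>i\<in>UNIV - X. (-1::int)))"
      by (rule prod_add) simp
    also have "\<dots> = (\<Sum>X\<in>Pow UNIV. (-1) ^ (card (UNIV::'n set) - card X) * int (card (msum W X)))"
    proof (rule sum.cong)
      fix X :: "'n set" assume "X \<in> Pow UNIV"
      have "card (UNIV - X) = card (UNIV::'n set) - card X" by (simp add: card_Diff_subset)
      then show "(\<Prod>i\<in>X. int (card (S i))) * (\<Prod>i\<in>UNIV - X. (-1::int)) =
            (-1) ^ (card (UNIV::'n set) - card X) * int (card (msum W X))"
        by (simp add: cardW)
    qed simp
    finally show ?thesis unfolding mixedD_def by simp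
  qed
  define G where "G = {\<bar>s - s'\<bar> | i s s'. s \<in> S i \<and> s' \<in> S i \<and> s \<noteq> s'}"
  have finG: "finite G"
  proof -
    have "G \<subseteq> (\<lambda>(s, s'). \<bar>s - s'\<bar>) ` (\<Union>i. S i \<times> S i)" unfolding G_def by force
    moreover have "finite (\<Union>i. S i \<times> S i)" using finS by auto
    ultimately show ?thesis by (meson finite_imageI finite_subset)
  qed
  obtain i0 :: 'n where True by blast
  have "\<bar>1 - 0\<bar> \<in> G" unfolding G_def using S01[of i0] by force
  then have neG: "G \<noteq> {}" by blast
  define g where "g = Min G"
  have gpos: "g > 0"
  proof -
    have "g \<in> G" unfolding g_def using finG neG by (rule Min_in)
    then show ?thesis unfolding G_def by auto
  qed
  have gap: "g \<le> \<bar>s - s'\<bar>" if "s \<in> S i" "s' \<in> S i" "s \<noteq> s'" for s s' i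
  proof -
    have "\<bar>s - s'\<bar> \<in> G" unfolding G_def using that by blast
    then show ?thesis unfolding g_def using finG by simp
  qed
  obtain Linv where linv: "linear Linv" "L \<circ> Linv = id"
    using real_vector.linear_surjective_right_inverse[OF linL surjL] by blast
  obtain B where B: "B > 0" "\<And>x. norm (Linv x) \<le> B * norm x"
    using linear_bounded_pos[OF linv(1)] by blast
  show ?thesis unfolding Q_def[symmetric]
  proof (rule exI[of _ "g / B"], intro conjI allI impI)
    show "g / B > 0" using gpos B by simp
  next
    fix \<delta> :: "real^'n"
    assume asm: "norm \<delta> < g / B \<and> (\<forall>F. F face_of Q \<and> F \<noteq> {} \<and> F \<noteq> Q \<longrightarrow>
                \<delta> \<notin> span {x - y | x y. x \<in> F \<and> y \<in> F})"
    define d where "d = Linv \<delta>"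
    have Ld: "L d = \<delta>" using linv(2) by (simp add: d_def pointfree_idE)
    have dsmall: "\<bar>d$i\<bar> < g" for i
    proof -
      have "\<bar>d$i\<bar> \<le> norm d" by (rule component_le_norm_cart)
      also have "\<dots> \<le> B * norm \<delta>" using B(2) by (simp add: d_def)
      also have "\<dots> < B * (g / B)" using asm B(1) by (intro mult_strict_left_mono) auto
      also have "\<dots> = g" using B(1) by simp
      finally show ?thesis .
    qed
    have Laxis: "L (axis j 1) = v j" for j
      unfolding L_def by (simp add: axis_def if_distrib[of "\<lambda>x. x *\<^sub>R _"] cong: if_cong)
    have L_0: "L 0 = 0" using linear_0[OF linL] .
    have boxc: "box = cbox 0 1" by (auto simp: box_def mem_box_cart)
    have dnz: "d$i \<noteq> 0" for i
    proof
      assume di: "d$i = 0"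
      define F where "F = P ` (box \<inter> {x. (- axis i 1) \<bullet> x = 0})"
      have "(box \<inter> {x. (- axis i 1) \<bullet> x = 0}) face_of box"
        unfolding boxc
        by (rule face_of_Int_supporting_hyperplane_le) (auto simp: mem_box_cart inner_axis')
      then have "L ` (box \<inter> {x. (- axis i 1) \<bullet> x = 0}) face_of L ` box"
        using face_of_linear_image[OF linL injL] by blast
      then have "(+) A ` L ` (box \<inter> {x. (- axis i 1) \<bullet> x = 0}) face_of (+) A ` L ` box"
        by simp
      then have Fface: "F face_of Q" unfolding F_def Q_eq P_def image_image .
      have mem: "t \<in> box \<inter> {x. (- axis i 1) \<bullet> x = 0} \<longleftrightarrow> t \<in> box \<and> t$i = 0" for t
        by (simp add: inner_axis')
      have "P 0 \<in> F" unfolding F_def mem by (auto simp: box_def)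
      then have Fne: "F \<noteq> {}" by blast
      have "P (axis i 1) \<in> Q" unfolding Q_eq by (auto simp: box_def axis_def)
      moreover have "P (axis i 1) \<notin> F"
      proof
        assume "P (axis i 1) \<in> F"
        then obtain t where "t$i = 0" "P (axis i 1) = P t" using mem unfolding F_def by blast
        then show False using injP by (metis axis_nth injD zero_neq_one)
      qed
      ultimately have FQ: "F \<noteq> Q" by blast
      have "\<delta> \<in> span {x - y | x y. x \<in> F \<and> y \<in> F}"
      proof -
        have "\<delta> = (\<Sum>j\<in>UNIV. d$j *\<^sub>R v j)" using Ld by (simp add: L_def)
        also have "\<dots> \<in> span {x - y | x y. x \<in> F \<and> y \<in> F}"
        proof (rule span_sum)
          fix j :: 'n
          show "d$j *\<^sub>R v j \<in> span {x - y | x y. x \<in> F \<and> y \<in> F}"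
          proof (cases "j = i")
            case True then show ?thesis using di by (simp add: span_zero)
          next
            case False
            have "axis j 1 \<in> box \<inter> {x. (- axis i 1) \<bullet> x = 0}"
              unfolding mem using False by (auto simp: box_def axis_def)
            then have "P (axis j 1) \<in> F" unfolding F_def by (rule imageI)
            moreover have "v j = P (axis j 1) - P 0" by (simp add: P_def Laxis L_0)
            ultimately have "v j \<in> {x - y | x y. x \<in> F \<and> y \<in> F}" using \<open>P 0 \<in> F\<close> by blast
            then show ?thesis by (intro span_mul span_base)
          qed
        qed
        finally show ?thesis .
      qed
      then show False using asm Fface Fne FQ by blast
    qed
    define X where "X = {t::real^'n. \<forall>i. t$i \<in> {d$i..1 + d$i}}"
    have shift: "(\<lambda>q. \<delta> + q) ` Q = P ` X"
    proof (rule set_eqI, rule iffI)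
      fix x assume "x \<in> (\<lambda>q. \<delta> + q) ` Q"
      then obtain t where t: "t \<in> box" "x = \<delta> + P t" unfolding Q_eq by auto
      have "x = P (d + t)" using t(2) Ld linear_add[OF linL] by (simp add: P_def algebra_simps)
      moreover have "d + t \<in> X" using t(1) by (auto simp: X_def box_def)
      ultimately show "x \<in> P ` X" by blast
    next
      fix x assume "x \<in> P ` X"
      then obtain t where t: "t \<in> X" "x = P t" by auto
      have "x = \<delta> + P (t - d)" using t(2) Ld linear_diff[OF linL, of t d] by (simp add: P_def)
      moreover have "t - d \<in> box" using t(1) unfolding X_def box_def by (smt (verit) atLeastAtMost_iff mem_Collect_eq vector_minus_component)
      ultimately show "x \<in> (\<lambda>q. \<delta> + q) ` Q" unfolding Q_eq by blast
    qed
    have "msum W UNIV \<inter> (\<lambda>q. \<delta> + q) ` Q = P ` ({t. \<forall>i. t$i \<in> S i} \<inter> X)"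
      unfolding MW shift using injP by (simp add: image_Int)
    also have "{t. \<forall>i. t$i \<in> S i} \<inter> X = {t. \<forall>i. t$i \<in> S i \<inter> {d$i..1 + d$i}}"
      by (auto simp: X_def)
    finally have cnt0: "msum W UNIV \<inter> (\<lambda>q. \<delta> + q) ` Q = P ` {t. \<forall>i. t$i \<in> S i \<inter> {d$i..1 + d$i}}" .
    have cnt: "card (msum W UNIV \<inter> (\<lambda>q. \<delta> + q) ` Q) = (\<Prod>i\<in>UNIV. card (S i \<inter> {d$i..1 + d$i}))"
      unfolding cnt0 card_image[OF inj_on_subset[OF injP subset_UNIV]] by (rule vec_card)
    have each: "card (S i \<inter> {d$i..1 + d$i}) = card (S i) - 1" for i
    proof (cases "d$i > 0")
      case True
      have "S i \<inter> {d$i..1 + d$i} = S i - {0}"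
      proof (rule set_eqI, rule iffI)
        fix s assume "s \<in> S i - {0}"
        then have "g \<le> \<bar>s - 0\<bar>" "0 \<le> s" "s \<le> 1" using gap[of s i 0] S01 Sle by auto
        then show "s \<in> S i \<inter> {d$i..1 + d$i}" using \<open>s \<in> S i - {0}\<close> dsmall[of i] True by auto
      qed (use True in auto)
      then show ?thesis using S01 finS by simp
    next
      case False
      then have neg: "d$i < 0" using dnz[of i] by linarith
      have "S i \<inter> {d$i..1 + d$i} = S i - {1}"
      proof (rule set_eqI, rule iffI)
        fix s assume "s \<in> S i - {1}"
        then have "g \<le> \<bar>s - 1\<bar>" "0 \<le> s" "s \<le> 1" using gap[of s i 1] S01 Sle by auto
        then show "s \<in> S i \<inter> {d$i..1 + d$i}" using \<open>s \<in> S i - {1}\<close> dsmall[of i] neg by auto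
      qed (use neg in auto)
      then show ?thesis using S01 finS by simp
    qed
    have pos: "card (S i) \<ge> 1" for i using S01[of i] finS[of i]
      by (metis One_nat_def Suc_leI card_gt_0_iff empty_iff)
    have "int (card (msum W UNIV \<inter> (\<lambda>q. \<delta> + q) ` Q)) = (\<Prod>i\<in>UNIV. int (card (S i)) - 1)"
      unfolding cnt each using pos by (simp add: of_nat_diff)
    then show "mixedD W UNIV = int (card (msum W UNIV \<inter> (\<lambda>q. \<delta> + q) ` Q))"
      using D by simp
  qed
qed

end
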